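(* Let $M \in \{0,1\}^{n \times n}$ be a $d$-twin-ordered binary matrix. Then $M$ can be preprocessed in time $\mathcal{O}(n^2+dn)$ so that afterwards, for an arbitrary column vector $v \in \mathbb{R}^n$, each of the products $Mv$ and $v^\intercal M$ can be computed in time $\mathcal{O}(dn)$.
   Context: Running times assume unit-cost arithmetic operations on scalars. Definitions. A division of an $n\times n$ matrix $M$ is a pair $(\mathcal{R},\mathscr{C})$ of partitions of $[n]$ into contiguous non-empty intervals; the cell $(i,j)$ is the submatrix of $M$ with rows in the $i$-th interval of $\mathcal{R}$ and columns in the $j$-th interval of $\mathscr{C}$; a cell is constant if all its entries are equal. A row (resp. column) of the division is the set of cells sharing a given interval of $\mathcal{R}$ (resp. $\mathscr{C}$). A merge sequence of $M$ is a sequence of divisions $(\mathcal{R}_{2n-1},\mathscr{C}_{2n-1}),\dots,(\mathcal{R}_1,\mathscr{C}_1)$ where $\mathcal{R}_{2n-1}=\mathscr{C}_{2n-1}$ is the partition into singletons, $\mathcal{R}_1=\mathscr{C}_1=\{[n]\}$, and each division is obtained from the previous one by merging two adjacent intervals of either the row partition or the column partition (not both). It is $d$-wide if in every division every row and every column contains at most $d$ non-constant cells. $M$ is $d$-twin-ordered if it (in its given row and column order) admits a $d$-wide merge sequence. *)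

theory Defs
  imports Complex_Main
begin

text \<open>Indices are 0-based: [n] is rendered as {..<n}. A binary matrix is M :: nat => nat => bool,
  only entries with indices < n are relevant.\<close>

definition interval_partition :: "nat \<Rightarrow> nat set set \<Rightarrow> bool" where
  "interval_partition n P \<longleftrightarrow>
     (\<forall>I\<in>P. I \<noteq> {} \<and> (\<exists>a b. I = {a..b})) \<and> \<Union>P = {..<n} \<and>
     (\<forall>I\<in>P. \<forall>J\<in>P. I \<noteq> J \<longrightarrow> I \<inter> J = {})"

type_synonym division = "nat set set \<times> nat set set"

definition is_division :: "nat \<Rightarrow> division \<Rightarrow> bool" where
  "is_division n D \<longleftrightarrow> interval_partition n (fst D) \<and> interval_partition n (snd D)"

definition merge_step :: "nat set set \<Rightarrow> nat set set \<Rightarrow> bool" where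
  "merge_step P P' \<longleftrightarrow>
     (\<exists>I\<in>P. \<exists>J\<in>P. (\<exists>a b c. I = {a..b} \<and> J = {Suc b..c}) \<and> P' = insert (I \<union> J) (P - {I, J}))"

definition division_step :: "division \<Rightarrow> division \<Rightarrow> bool" where
  "division_step D D' \<longleftrightarrow>
     (merge_step (fst D) (fst D') \<and> snd D' = snd D) \<or> (fst D' = fst D \<and> merge_step (snd D) (snd D'))"

definition singletons :: "nat \<Rightarrow> nat set set" where
  "singletons n = (\<lambda>i. {i}) ` {..<n}"

text \<open>A merge sequence is given as the list [(R_{2n-1},C_{2n-1}), ..., (R_1,C_1)].\<close>
definition merge_sequence :: "nat \<Rightarrow> division list \<Rightarrow> bool" where
  "merge_sequence n ds \<longleftrightarrow>
     length ds = 2 * n - 1 \<and> ds \<noteq> [] \<and>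
     (\<forall>D\<in>set ds. is_division n D) \<and>
     hd ds = (singletons n, singletons n) \<and>
     last ds = ({{..<n}}, {{..<n}}) \<and>
     (\<forall>k. Suc k < length ds \<longrightarrow> division_step (ds ! k) (ds ! Suc k))"

definition constant_cell :: "(nat \<Rightarrow> nat \<Rightarrow> bool) \<Rightarrow> nat set \<Rightarrow> nat set \<Rightarrow> bool" where
  "constant_cell M I J \<longleftrightarrow> (\<forall>i\<in>I. \<forall>j\<in>J. \<forall>i'\<in>I. \<forall>j'\<in>J. M i j = M i' j')"

definition wide_division :: "nat \<Rightarrow> (nat \<Rightarrow> nat \<Rightarrow> bool) \<Rightarrow> division \<Rightarrow> bool" where
  "wide_division d M D \<longleftrightarrow>
     (\<forall>I\<in>fst D. card {J\<in>snd D. \<not> constant_cell M I J} \<le> d) \<and>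
     (\<forall>J\<in>snd D. card {I\<in>fst D. \<not> constant_cell M I J} \<le> d)"

definition twin_ordered :: "nat \<Rightarrow> nat \<Rightarrow> (nat \<Rightarrow> nat \<Rightarrow> bool) \<Rightarrow> bool" where
  "twin_ordered n d M \<longleftrightarrow> (\<exists>ds. merge_sequence n ds \<and> (\<forall>D\<in>set ds. wide_division d M D))"

text \<open>Every executed statement / loop test / branch costs one time unit (programs are fixed,
  so expression sizes are constants).\<close>

datatype iexp = IConst int | IRd iexp | IAdd iexp iexp | ISub iexp iexp | IMul iexp iexp

datatype rexp = ROfInt iexp | RRd iexp | RAdd rexp rexp | RSub rexp rexp | RMul rexp rexp
  | RDiv rexp rexp

datatype bexp = ILe iexp iexp | IEq iexp iexp | RLe rexp rexp | REq rexp rexp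
  | BNot bexp | BAnd bexp bexp

datatype com = Skip | IStore iexp iexp | RStore iexp rexp | Seq com com
  | If bexp com com | While bexp com

type_synonym state = "(int \<Rightarrow> int) \<times> (int \<Rightarrow> real)"

fun ieval :: "iexp \<Rightarrow> (int \<Rightarrow> int) \<Rightarrow> int" where
  "ieval (IConst c) m = c"
| "ieval (IRd a) m = m (ieval a m)"
| "ieval (IAdd a b) m = ieval a m + ieval b m"
| "ieval (ISub a b) m = ieval a m - ieval b m"
| "ieval (IMul a b) m = ieval a m * ieval b m"

fun reval :: "rexp \<Rightarrow> state \<Rightarrow> real" where
  "reval (ROfInt a) s = of_int (ieval a (fst s))"
| "reval (RRd a) s = snd s (ieval a (fst s))"
| "reval (RAdd a b) s = reval a s + reval b s"
| "reval (RSub a b) s = reval a s - reval b s"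
| "reval (RMul a b) s = reval a s * reval b s"
| "reval (RDiv a b) s = reval a s / reval b s"

fun beval :: "bexp \<Rightarrow> state \<Rightarrow> bool" where
  "beval (ILe a b) s = (ieval a (fst s) \<le> ieval b (fst s))"
| "beval (IEq a b) s = (ieval a (fst s) = ieval b (fst s))"
| "beval (RLe a b) s = (reval a s \<le> reval b s)"
| "beval (REq a b) s = (reval a s = reval b s)"
| "beval (BNot b) s = (\<not> beval b s)"
| "beval (BAnd a b) s = (beval a s \<and> beval b s)"

inductive big_step :: "com \<Rightarrow> state \<Rightarrow> nat \<Rightarrow> state \<Rightarrow> bool" where
  Skip: "big_step Skip s 1 s"
| IStore: "big_step (IStore a e) s 1 ((fst s)(ieval a (fst s) := ieval e (fst s)), snd s)"
| RStore: "big_step (RStore a e) s 1 (fst s, (snd s)(ieval a (fst s) := reval e s))"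
| Seq: "big_step c1 s t1 s' \<Longrightarrow> big_step c2 s' t2 s'' \<Longrightarrow> big_step (Seq c1 c2) s (t1 + t2) s''"
| IfT: "beval b s \<Longrightarrow> big_step c1 s t s' \<Longrightarrow> big_step (If b c1 c2) s (Suc t) s'"
| IfF: "\<not> beval b s \<Longrightarrow> big_step c2 s t s' \<Longrightarrow> big_step (If b c1 c2) s (Suc t) s'"
| WhileF: "\<not> beval b s \<Longrightarrow> big_step (While b c) s 1 s"
| WhileT: "beval b s \<Longrightarrow> big_step c s t s' \<Longrightarrow> big_step (While b c) s' t' s'' \<Longrightarrow>
           big_step (While b c) s (Suc (t + t')) s''"

definition pre_input :: "nat \<Rightarrow> nat \<Rightarrow> (nat \<Rightarrow> nat \<Rightarrow> bool) \<Rightarrow> state" where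
  "pre_input n d M =
     ((\<lambda>a. if a = 0 then int n else if a = 1 then int d
           else if 2 \<le> a \<and> a < 2 + int n * int n
             then (if M (nat (a - 2) div n) (nat (a - 2) mod n) then 1 else 0)
           else 0),
      (\<lambda>_. 0))"

definition query_input :: "nat \<Rightarrow> (nat \<Rightarrow> real) \<Rightarrow> state \<Rightarrow> state" where
  "query_input n v s =
     (fst s, (\<lambda>a. if - int n \<le> a \<and> a < 0 then v (nat (- a - 1)) else snd s a))"

definition out_addr :: "nat \<Rightarrow> nat \<Rightarrow> int" where
  "out_addr n i = - int n - 1 - int i"

end

theory Submission
  imports Defs
begin

definition runs :: "com \<Rightarrow> state \<Rightarrow> (state \<Rightarrow> bool) \<Rightarrow> nat \<Rightarrow> bool" where
  "runs c s Q T \<longleftrightarrow> (\<exists>t s'. big_step c s t s' \<and> t \<le> T \<and> Q s')"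

lemma runs_mono: "runs c s Q T \<Longrightarrow> T \<le> T' \<Longrightarrow> (\<And>s. Q s \<Longrightarrow> Q' s) \<Longrightarrow> runs c s Q' T'"
  unfolding runs_def by (meson le_trans)

lemma runs_Skip: "1 \<le> T \<Longrightarrow> Q s \<Longrightarrow> runs Skip s Q T"
  unfolding runs_def using big_step.Skip by blast

lemma runs_IStore: "1 \<le> T \<Longrightarrow> Q (m(ieval a m := ieval e m), r) \<Longrightarrow> runs (IStore a e) (m, r) Q T"
  unfolding runs_def using big_step.IStore[of a e "(m,r)"] by fastforce

lemma runs_RStore: "1 \<le> T \<Longrightarrow> Q (m, r(ieval a m := reval e (m,r))) \<Longrightarrow> runs (RStore a e) (m, r) Q T"
  unfolding runs_def using big_step.RStore[of a e "(m,r)"] by fastforce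

lemma runs_Seq: "runs c1 s Q T1 \<Longrightarrow> (\<And>s'. Q s' \<Longrightarrow> runs c2 s' R T2) \<Longrightarrow> runs (Seq c1 c2) s R (T1 + T2)"
  unfolding runs_def by (meson add_le_mono big_step.Seq)

lemma runs_If: "(beval b s \<Longrightarrow> runs c1 s Q T) \<Longrightarrow> (\<not> beval b s \<Longrightarrow> runs c2 s Q T) \<Longrightarrow> runs (If b c1 c2) s Q (Suc T)"
  unfolding runs_def by (meson Suc_le_mono big_step.IfF big_step.IfT)

lemma runs_Seq_IStore: "1 \<le> T \<Longrightarrow> runs c (m(ieval a m := ieval e m), r) Q (T - 1) \<Longrightarrow> runs (Seq (IStore a e) c) (m, r) Q T"
proof -
  assume a1: "1 \<le> T" and a2: "runs c (m(ieval a m := ieval e m), r) Q (T - 1)"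
  have "runs (Seq (IStore a e) c) (m, r) Q (1 + (T - 1))"
    by (rule runs_Seq[where Q="\<lambda>s. s = (m(ieval a m := ieval e m), r)"]) (use a2 in \<open>auto intro: runs_IStore\<close>)
  then show ?thesis using a1 by simp
qed

lemma runs_Seq_RStore: "1 \<le> T \<Longrightarrow> runs c (m, r(ieval a m := reval e (m,r))) Q (T - 1) \<Longrightarrow> runs (Seq (RStore a e) c) (m, r) Q T"
proof -
  assume a1: "1 \<le> T" and a2: "runs c (m, r(ieval a m := reval e (m,r))) Q (T - 1)"
  have "runs (Seq (RStore a e) c) (m, r) Q (1 + (T - 1))"
    by (rule runs_Seq[where Q="\<lambda>s. s = (m, r(ieval a m := reval e (m,r)))"]) (use a2 in \<open>auto intro: runs_RStore\<close>)
  then show ?thesis using a1 by simp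
qed

lemma runs_Seq_Skip: "1 \<le> T \<Longrightarrow> runs c s Q (T - 1) \<Longrightarrow> runs (Seq Skip c) s Q T"
proof -
  assume a1: "1 \<le> T" and a2: "runs c s Q (T - 1)"
  have "runs (Seq Skip c) s Q (1 + (T - 1))"
    by (rule runs_Seq[where Q="\<lambda>s'. s' = s"]) (use a2 in \<open>auto intro: runs_Skip\<close>)
  then show ?thesis using a1 by simp
qed

lemma runs_Seq_assoc: "runs (Seq a (Seq b c)) s Q T \<Longrightarrow> runs (Seq (Seq a b) c) s Q T"
  unfolding runs_def
proof (elim exE conjE)
  fix t s' assume h: "big_step (Seq a (Seq b c)) s t s'" "t \<le> T" "Q s'"
  from h(1) obtain t1 t23 s1 where 1: "big_step a s t1 s1" "big_step (Seq b c) s1 t23 s'" "t = t1 + t23"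
    by (cases rule: big_step.cases) auto
  from 1(2) obtain t2 t3 s2 where 2: "big_step b s1 t2 s2" "big_step c s2 t3 s'" "t23 = t2 + t3"
    by (cases rule: big_step.cases) auto
  have "big_step (Seq (Seq a b) c) s ((t1 + t2) + t3) s'"
    using 1 2 by (meson big_step.Seq)
  then show "\<exists>t s'. big_step (Seq (Seq a b) c) s t s' \<and> t \<le> T \<and> Q s'"
    using h 1 2 by (metis add.assoc)
qed

lemma runs_Seq_If: "1 \<le> T \<Longrightarrow> (beval b s \<Longrightarrow> runs (Seq c1 c) s Q (T - 1)) \<Longrightarrow> (\<not> beval b s \<Longrightarrow> runs (Seq c2 c) s Q (T - 1))
  \<Longrightarrow> runs (Seq (If b c1 c2) c) s Q T"
  unfolding runs_def
proof -
  assume T: "1 \<le> T" and a: "beval b s \<Longrightarrow> \<exists>t s'. big_step (Seq c1 c) s t s' \<and> t \<le> T - 1 \<and> Q s'"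
     and b: "\<not> beval b s \<Longrightarrow> \<exists>t s'. big_step (Seq c2 c) s t s' \<and> t \<le> T - 1 \<and> Q s'"
  show "\<exists>t s'. big_step (Seq (If b c1 c2) c) s t s' \<and> t \<le> T \<and> Q s'"
  proof (cases "beval b s")
    case True
    then obtain t s' where h: "big_step (Seq c1 c) s t s'" "t \<le> T - 1" "Q s'" using a by blast
    from h(1) obtain t1 t2 s1 where 1: "big_step c1 s t1 s1" "big_step c s1 t2 s'" "t = t1 + t2"
      by (cases rule: big_step.cases) auto
    have "big_step (Seq (If b c1 c2) c) s (Suc t1 + t2) s'"
      using 1 True by (meson big_step.Seq big_step.IfT)
    then show ?thesis using h 1 T by (intro exI[of _ "Suc t1 + t2"] exI[of _ s']) auto
  next
    case False
    then obtain t s' where h: "big_step (Seq c2 c) s t s'" "t \<le> T - 1" "Q s'" using b by blast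
    from h(1) obtain t1 t2 s1 where 1: "big_step c2 s t1 s1" "big_step c s1 t2 s'" "t = t1 + t2"
      by (cases rule: big_step.cases) auto
    have "big_step (Seq (If b c1 c2) c) s (Suc t1 + t2) s'"
      using 1 False by (meson big_step.Seq big_step.IfF)
    then show ?thesis using h 1 T by (intro exI[of _ "Suc t1 + t2"] exI[of _ s']) auto
  qed
qed

lemma runs_While_aux:
  assumes step: "\<And>k s. k < N \<Longrightarrow> I k s \<Longrightarrow> beval b s \<and> runs c s (I (Suc k)) T"
  and fin: "\<And>s. I N s \<Longrightarrow> \<not> beval b s"
  shows "j \<le> N \<Longrightarrow> I (N - j) s \<Longrightarrow> runs (While b c) s (I N) (j * Suc T + 1)"
proof (induction j arbitrary: s)
  case 0
  then show ?case using fin[of s] big_step.WhileF[of b s c] unfolding runs_def by fastforce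
next
  case (Suc j)
  have k: "N - Suc j < N" using Suc by simp
  from step[OF k] Suc.prems obtain t s' where h: "beval b s" "big_step c s t s'" "t \<le> T" "I (Suc (N - Suc j)) s'"
    unfolding runs_def by blast
  have "Suc (N - Suc j) = N - j" using Suc.prems by simp
  with h Suc.IH[of s'] Suc.prems obtain t' s'' where h2: "big_step (While b c) s' t' s''" "t' \<le> j * Suc T + 1" "I N s''"
    unfolding runs_def by auto
  have "big_step (While b c) s (Suc (t + t')) s''" using h h2 big_step.WhileT by blast
  moreover have "Suc (t + t') \<le> Suc j * Suc T + 1" using h h2 by simp
  ultimately show ?case using h2 unfolding runs_def by blast
qed

lemma runs_While:
  assumes "\<And>k s. k < N \<Longrightarrow> I k s \<Longrightarrow> beval b s \<and> runs c s (I (Suc k)) T"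
  and "\<And>s. I N s \<Longrightarrow> \<not> beval b s"
  and "I 0 s"
  shows "runs (While b c) s (I N) (N * Suc T + 1)"
  using runs_While_aux[where j=N and N=N and I=I and b=b and c=c and T=T and s=s] assms by simp


definition fM :: "(nat \<Rightarrow> nat \<Rightarrow> bool) \<Rightarrow> nat \<Rightarrow> nat \<Rightarrow> int" where
  "fM M i j = (if M i j then 1 else 0)"

definition Dz :: "(nat \<Rightarrow> nat \<Rightarrow> bool) \<Rightarrow> nat \<Rightarrow> nat \<Rightarrow> int" where
  "Dz M i j = fM M i j - (if 0 < i then fM M (i-1) j else 0) - (if 0 < j then fM M i (j-1) else 0)
     + (if 0 < i \<and> 0 < j then fM M (i-1) (j-1) else 0)"

lemma Dz_transpose: "Dz (\<lambda>i j. M j i) i j = Dz M j i"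
  unfolding Dz_def fM_def by auto

definition Zc :: "nat \<Rightarrow> (nat \<Rightarrow> nat \<Rightarrow> bool) \<Rightarrow> (nat \<times> nat) set" where
  "Zc n M = {(i,j). 0 < i \<and> i < n \<and> 0 < j \<and> j < n \<and> Dz M i j \<noteq> 0}"

lemma Zc_bad: assumes "(i,j) \<in> Zc n M" shows "M (i-1) (j-1) \<noteq> M (i-1) j \<or> M i (j-1) \<noteq> M i j"
proof (rule ccontr)
  assume h: "\<not> (M (i-1) (j-1) \<noteq> M (i-1) j \<or> M i (j-1) \<noteq> M i j)"
  have ij: "0 < i" "0 < j" "Dz M i j \<noteq> 0" using assms unfolding Zc_def by auto
  have "Dz M i j = fM M i j - fM M (i-1) j - fM M i (j-1) + fM M (i-1) (j-1)"
    using ij unfolding Dz_def by simp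
  also have "\<dots> = 0" using h unfolding fM_def by simp
  finally show False using ij by simp
qed

lemma Zc_finite: "finite (Zc n M)"
  by (rule finite_subset[of _ "{..<n} \<times> {..<n}"]) (auto simp: Zc_def)

lemma Zc_transpose: "(i,j) \<in> Zc n (\<lambda>i j. M j i) \<longleftrightarrow> (j,i) \<in> Zc n M"
  using Dz_transpose[of M i j] unfolding Zc_def by auto

definition sep :: "nat set set \<Rightarrow> nat \<Rightarrow> nat \<Rightarrow> bool" where
  "sep P x y \<longleftrightarrow> (\<forall>X\<in>P. \<not> (x \<in> X \<and> y \<in> X))"

definition alive :: "nat \<Rightarrow> (nat \<Rightarrow> nat \<Rightarrow> bool) \<Rightarrow> division \<Rightarrow> (nat \<times> nat) set" where
  "alive n M D = {(i,j) \<in> Zc n M. sep (fst D) (i-1) i \<and> sep (snd D) (j-1) j}"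

lemma alive_finite: "finite (alive n M D)"
  by (rule finite_subset[OF _ Zc_finite]) (auto simp: alive_def)

lemma alive_transpose: "alive n M (R,C) = prod.swap ` alive n (\<lambda>i j. M j i) (C,R)"
proof -
  have "(i,j) \<in> alive n M (R,C) \<longleftrightarrow> (j,i) \<in> alive n (\<lambda>i j. M j i) (C,R)" for i j
    unfolding alive_def using Zc_transpose[of j i n M] by auto
  then show ?thesis by (auto simp: pair_in_swap_image)
qed

lemma ip_finite: "interval_partition n R \<Longrightarrow> finite R"
proof -
  assume "interval_partition n R"
  then have "R \<subseteq> Pow {..<n}" unfolding interval_partition_def by blast
  then show "finite R" by (rule finite_subset) simp
qed

lemma merge_step_sep: assumes "merge_step C C'" "sep C' x y" shows "sep C x y"
proof -
  obtain I J where IJ: "C' = insert (I \<union> J) (C - {I, J})"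
    using assms(1) unfolding merge_step_def by blast
  show ?thesis unfolding sep_def
  proof
    fix X assume X: "X \<in> C"
    show "\<not> (x \<in> X \<and> y \<in> X)"
    proof (cases "X = I \<or> X = J")
      case True
      then have "I \<union> J \<in> C'" "X \<subseteq> I \<union> J" using IJ by auto
      then show ?thesis using assms(2) unfolding sep_def by blast
    next
      case False
      then have "X \<in> C'" using IJ X by auto
      then show ?thesis using assms(2) unfolding sep_def by blast
    qed
  qed
qed

lemma col_step:
  assumes R: "interval_partition n R" and ms: "merge_step C C'"
    and w: "\<forall>Y\<in>C'. card {X\<in>R. \<not> constant_cell M X Y} \<le> d"
  shows "alive n M (R,C') \<subseteq> alive n M (R,C)"
    and "card (alive n M (R,C) - alive n M (R,C')) \<le> 2*d"
proof -
  show "alive n M (R,C') \<subseteq> alive n M (R,C)"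
    unfolding alive_def using merge_step_sep[OF ms] by auto
next
  obtain I J a b c where IJ: "I \<in> C" "J \<in> C" "I = {a..b}" "J = {Suc b..c}"
    and C': "C' = insert (I \<union> J) (C - {I, J})"
    using ms unfolding merge_step_def by blast
  define N where "N = {X\<in>R. \<not> constant_cell M X (I \<union> J)}"
  have fR: "finite R" using ip_finite[OF R] .
  have fN: "finite N" unfolding N_def using fR by simp
  have cN: "card N \<le> d" unfolding N_def using w C' by auto
  have UR: "\<Union>R = {..<n}" and IR: "\<forall>X\<in>R. X \<noteq> {} \<and> (\<exists>a b. X = {a..b})"
    using R unfolding interval_partition_def by auto
  have sub: "alive n M (R,C) - alive n M (R,C') \<subseteq>
      (\<lambda>X. (Suc (Max X), Suc b)) ` N \<union> (\<lambda>X. (Min X, Suc b)) ` N"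
  proof
    fix p assume p: "p \<in> alive n M (R,C) - alive n M (R,C')"
    obtain i j where pij: "p = (i,j)" by (cases p)
    have Z: "(i,j) \<in> Zc n M" and sR: "sep R (i-1) i" and sC: "sep C (j-1) j"
      and nsC': "\<not> sep C' (j-1) j"
      using p unfolding pij alive_def by auto
    have ij: "0 < i" "i < n" "0 < j" "j < n" using Z unfolding Zc_def by auto
    from nsC' obtain Y where Y: "Y \<in> C'" "j-1 \<in> Y" "j \<in> Y" unfolding sep_def by auto
    have YIJ: "Y = I \<union> J"
      using Y sC C' unfolding sep_def by auto
    have nI: "\<not> (j-1 \<in> I \<and> j \<in> I)" and nJ: "\<not> (j-1 \<in> J \<and> j \<in> J)"
      using sC IJ unfolding sep_def by auto
    have jb: "j = Suc b"
      using Y YIJ nI nJ IJ ij by auto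
    have bI: "b \<in> I \<union> J" and SbI: "Suc b \<in> I \<union> J" using Y YIJ jb by auto
    have bad: "M (i-1) b \<noteq> M (i-1) (Suc b) \<or> M i b \<noteq> M i (Suc b)"
      using Zc_bad[OF Z] jb by simp
    then show "p \<in> (\<lambda>X. (Suc (Max X), Suc b)) ` N \<union> (\<lambda>X. (Min X, Suc b)) ` N"
    proof
      assume A: "M (i-1) b \<noteq> M (i-1) (Suc b)"
      obtain X where X: "X \<in> R" "i-1 \<in> X" using UR ij by (metis UnionE lessThan_iff less_imp_diff_less)
      have iX: "i \<notin> X" using sR X unfolding sep_def by auto
      obtain a' b' where ab: "X = {a'..b'}" using IR X by blast
      have b': "b' = i - 1" using X iX ab ij by auto
      have mx: "Max X = i - 1"
        using ab b' X by (auto intro!: Max_eqI)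
      have "\<not> constant_cell M X (I \<union> J)"
        unfolding constant_cell_def using A X bI SbI by blast
      then have "X \<in> N" unfolding N_def using X by auto
      moreover have "p = (Suc (Max X), Suc b)" using pij mx jb ij by simp
      ultimately show ?thesis by blast
    next
      assume A: "M i b \<noteq> M i (Suc b)"
      obtain X where X: "X \<in> R" "i \<in> X" using UR ij by blast
      have iX: "i - 1 \<notin> X" using sR X unfolding sep_def by auto
      obtain a' b' where ab: "X = {a'..b'}" using IR X by blast
      have a': "a' = i" using X iX ab ij by auto
      have mn: "Min X = i"
        using ab a' X by (auto intro!: Min_eqI)
      have "\<not> constant_cell M X (I \<union> J)"
        unfolding constant_cell_def using A X bI SbI by blast
      then have "X \<in> N" unfolding N_def using X by auto
      moreover have "p = (Min X, Suc b)" using pij mn jb by simp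
      ultimately show ?thesis by blast
    qed
  qed
  have "card (alive n M (R,C) - alive n M (R,C')) \<le>
      card ((\<lambda>X. (Suc (Max X), Suc b)) ` N \<union> (\<lambda>X. (Min X, Suc b)) ` N)"
    by (rule card_mono[OF _ sub]) (use fN in simp)
  also have "\<dots> \<le> card ((\<lambda>X. (Suc (Max X), Suc b)) ` N) + card ((\<lambda>X. (Min X, Suc b)) ` N)"
    by (rule card_Un_le)
  also have "\<dots> \<le> card N + card N"
    using card_image_le[OF fN] add_mono by blast
  finally show "card (alive n M (R,C) - alive n M (R,C')) \<le> 2*d" using cN by simp
qed

lemma cc_transpose: "constant_cell (\<lambda>i j. M j i) X Y = constant_cell M Y X"
  unfolding constant_cell_def by blast

lemma row_step:
  assumes C: "interval_partition n C" and ms: "merge_step R R'"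
    and w: "\<forall>X\<in>R'. card {Y\<in>C. \<not> constant_cell M X Y} \<le> d"
  shows "alive n M (R',C) \<subseteq> alive n M (R,C)"
    and "card (alive n M (R,C) - alive n M (R',C)) \<le> 2*d"
proof -
  let ?Mt = "\<lambda>i j. M j i"
  have w': "\<forall>Y\<in>R'. card {X\<in>C. \<not> constant_cell ?Mt X Y} \<le> d"
  proof
    fix Y assume "Y \<in> R'"
    then have "card {X\<in>C. \<not> constant_cell M Y X} \<le> d" using w by blast
    moreover have "{X\<in>C. \<not> constant_cell ?Mt X Y} = {X\<in>C. \<not> constant_cell M Y X}"
      using cc_transpose[of M] by auto
    ultimately show "card {X\<in>C. \<not> constant_cell ?Mt X Y} \<le> d" by simp
  qed
  note cs = col_step[OF C ms w']
  show "alive n M (R',C) \<subseteq> alive n M (R,C)"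
    using cs(1) alive_transpose[of n M R C] alive_transpose[of n M R' C] by (metis image_mono)
  have "alive n M (R,C) - alive n M (R',C) = prod.swap ` (alive n ?Mt (C,R) - alive n ?Mt (C,R'))"
    using alive_transpose[of n M R C] alive_transpose[of n M R' C] by (simp add: image_set_diff)
  then have "card (alive n M (R,C) - alive n M (R',C)) = card (alive n ?Mt (C,R) - alive n ?Mt (C,R'))"
    by (simp add: card_image)
  then show "card (alive n M (R,C) - alive n M (R',C)) \<le> 2*d" using cs(2) by simp
qed

lemma one_step:
  assumes ds: "is_division n D" "is_division n D'" and st: "division_step D D'"
    and w: "wide_division d M D'"
  shows "card (alive n M D) \<le> card (alive n M D') + 2*d"
proof -
  obtain R C where D: "D = (R,C)" by (cases D)
  obtain R' C' where D': "D' = (R',C')" by (cases D')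
  have sub: "alive n M D' \<subseteq> alive n M D" and cd: "card (alive n M D - alive n M D') \<le> 2*d"
  proof -
    from st consider "merge_step R R'" "C' = C" | "R' = R" "merge_step C C'"
      unfolding division_step_def D D' by auto
    then have "alive n M D' \<subseteq> alive n M D \<and> card (alive n M D - alive n M D') \<le> 2*d"
    proof cases
      case 1
      then show ?thesis using row_step[where n=n and C=C and R=R and R'=R' and d=d and M=M] ds w unfolding D D' is_division_def wide_division_def
        by auto
    next
      case 2
      then show ?thesis using col_step[where n=n and R=R and C=C and C'=C' and d=d and M=M] ds w unfolding D D' is_division_def wide_division_def
        by auto
    qed
    then show "alive n M D' \<subseteq> alive n M D" "card (alive n M D - alive n M D') \<le> 2*d" by auto
  qed
  have "card (alive n M D) = card (alive n M D - alive n M D') + card (alive n M D')"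
    using sub alive_finite by (metis card_Diff_subset card_mono diff_add)
  then show ?thesis using cd by simp
qed

lemma Zc_bound:
  assumes ms: "merge_sequence n ds" and w: "\<forall>D\<in>set ds. wide_division d M D"
  shows "card (Zc n M) \<le> 2 * d * (length ds - 1)"
proof -
  define L where "L = length ds"
  have L1: "1 \<le> L" using ms unfolding merge_sequence_def L_def by (cases ds) auto
  have lastE: "alive n M (ds ! (L - 1)) = {}"
  proof -
    have "ds ! (L - 1) = ({{..<n}}, {{..<n}})"
    proof -
      have "ds \<noteq> []" using ms unfolding merge_sequence_def by auto
      then have "ds ! (L - 1) = last ds" unfolding L_def by (simp add: last_conv_nth)
      then show ?thesis using ms unfolding merge_sequence_def by simp
    qed
    then show ?thesis unfolding alive_def Zc_def sep_def by auto
  qed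
  have first: "alive n M (ds ! 0) = Zc n M"
  proof -
    have "ds ! 0 = (singletons n, singletons n)"
      using ms unfolding merge_sequence_def by (metis hd_conv_nth)
    then show ?thesis unfolding alive_def Zc_def sep_def singletons_def by auto
  qed
  have "m \<le> L - 1 \<Longrightarrow> card (alive n M (ds ! (L - 1 - m))) \<le> 2 * d * m" for m
  proof (induction m)
    case 0
    then show ?case using lastE by simp
  next
    case (Suc m)
    define k where "k = L - 1 - Suc m"
    have k: "Suc k < L" "L - 1 - m = Suc k" using Suc.prems L1 unfolding k_def by auto
    have divs: "is_division n (ds ! k)" "is_division n (ds ! Suc k)"
      using ms k unfolding merge_sequence_def L_def by auto
    have st: "division_step (ds ! k) (ds ! Suc k)" using ms k unfolding merge_sequence_def L_def by auto
    have wk: "wide_division d M (ds ! Suc k)" using w k unfolding L_def by auto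
    have "card (alive n M (ds ! k)) \<le> card (alive n M (ds ! Suc k)) + 2*d"
      by (rule one_step[OF divs st wk])
    also have "\<dots> \<le> 2*d*m + 2*d" using Suc k by simp
    finally show ?case unfolding k_def by (simp add: algebra_simps)
  qed
  from this[of "L - 1"] show ?thesis using first L_def by simp
qed


definition Ssum :: "(nat \<Rightarrow> real) \<Rightarrow> nat \<Rightarrow> nat \<Rightarrow> real" where
  "Ssum v n j = (\<Sum>z\<in>{j..<n}. v z)"

lemma tele: "(\<Sum>i<Suc x. (h i - (if 0<i then h (i-1) else 0))) = (h x :: real)"
  by (induction x) auto

lemma Ssum_Suc: "j \<le> n \<Longrightarrow> Ssum v (Suc n) j = Ssum v n j + v n"
  unfolding Ssum_def by simp

lemma abel: "(\<Sum>j<n. (h j - (if 0<j then h (j-1) else 0)) * Ssum v n j) = (\<Sum>j<n. h j * (v j :: real))"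
proof (induction n)
  case 0
  then show ?case by simp
next
  case (Suc n)
  let ?D = "\<lambda>j. h j - (if 0<j then h (j-1) else 0)"
  have "(\<Sum>j<Suc n. ?D j * Ssum v (Suc n) j) = (\<Sum>j<Suc n. ?D j * Ssum v n j + ?D j * v n)"
    by (rule sum.cong) (auto simp: Ssum_Suc algebra_simps)
  also have "\<dots> = (\<Sum>j<Suc n. ?D j * Ssum v n j) + (\<Sum>j<Suc n. ?D j) * v n"
    by (simp only: sum.distrib sum_distrib_right)
  also have "(\<Sum>j<Suc n. ?D j * Ssum v n j) = (\<Sum>j<n. ?D j * Ssum v n j)"
    by (simp add: Ssum_def)
  also have "(\<Sum>j<Suc n. ?D j) = h n" by (rule tele)
  finally show ?case using Suc.IH by simp
qed

lemma Dz_real: "real_of_int (Dz M i j) =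
   (let Rr = (\<lambda>j. real_of_int (fM M i j) - (if 0 < i then real_of_int (fM M (i-1) j) else 0)) in
    Rr j - (if 0 < j then Rr (j-1) else 0))"
  unfolding Dz_def Let_def by auto

lemma main_sum:
  assumes "x < n"
  shows "(\<Sum>i<n. \<Sum>j<n. (if i \<le> x then real_of_int (Dz M i j) * Ssum v n j else 0))
       = (\<Sum>j<n. of_bool (M x j) * v j)"
proof -
  define F where "F i j = real_of_int (fM M i j)" for i j
  define Rr where "Rr i j = F i j - (if 0 < i then F (i-1) j else 0)" for i j
  have D: "real_of_int (Dz M i j) = Rr i j - (if 0 < j then Rr i (j-1) else 0)" for i j
    unfolding Rr_def F_def using Dz_real[of M i j] by (simp add: Let_def)
  have "(\<Sum>i<n. \<Sum>j<n. (if i \<le> x then real_of_int (Dz M i j) * Ssum v n j else 0))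
     = (\<Sum>i<n. if i \<le> x then (\<Sum>j<n. Rr i j * v j) else 0)"
    by (rule sum.cong) (auto simp: D abel)
  also have "\<dots> = (\<Sum>i\<in>{..<Suc x}. (\<Sum>j<n. Rr i j * v j))"
  proof -
    have "{i\<in>{..<n}. i \<le> x} = {..<Suc x}" using assms by auto
    then show ?thesis using sum.inter_filter[of "{..<n}" "\<lambda>i. \<Sum>j<n. Rr i j * v j" "\<lambda>i. i \<le> x"] by simp
  qed
  also have "\<dots> = (\<Sum>j<n. (\<Sum>i<Suc x. Rr i j) * v j)"
    by (simp only: sum.swap[of _ "{..<Suc x}"] sum_distrib_right)
  also have "\<dots> = (\<Sum>j<n. F x j * v j)"
    unfolding Rr_def using tele[of "\<lambda>i. F i _" x] by presburger
  also have "\<dots> = (\<Sum>j<n. of_bool (M x j) * v j)"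
    unfolding F_def fM_def by (rule sum.cong) auto
  finally show ?thesis .
qed

lemma sum_div_mod: "(\<Sum>q<m*n. G (q div n) (q mod n)) = (\<Sum>i<m. \<Sum>j<(n::nat). G i j)"
proof (induction m)
  case 0
  then show ?case by simp
next
  case (Suc m)
  have "{..<Suc m * n} = {..<m*n} \<union> {m*n..<m*n+n}" by auto
  then have "(\<Sum>q<Suc m*n. G (q div n) (q mod n)) = (\<Sum>q<m*n. G (q div n) (q mod n)) + (\<Sum>q\<in>{m*n..<m*n+n}. G (q div n) (q mod n))"
    by (simp add: sum.union_disjoint ivl_disj_int(2))
  also have "(\<Sum>q\<in>{m*n..<m*n+n}. G (q div n) (q mod n)) = (\<Sum>j<n. G m j)"
  proof -
    have "(\<Sum>q\<in>{m*n..<m*n+n}. G (q div n) (q mod n)) = (\<Sum>j\<in>{0..<n}. G ((j + m*n) div n) ((j + m*n) mod n))"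
      by (subst sum.shift_bounds_nat_ivl[symmetric]) (simp add: add.commute)
    also have "\<dots> = (\<Sum>j<n. G m j)"
      by (rule sum.cong) auto
    finally show ?thesis .
  qed
  finally show ?case using Suc.IH by simp
qed

definition Lp :: "(nat \<Rightarrow> nat \<Rightarrow> bool) \<Rightarrow> nat \<Rightarrow> nat \<Rightarrow> (nat \<times> nat \<times> int) list" where
  "Lp M n p = filter (\<lambda>(i,j,c). c \<noteq> 0) (map (\<lambda>q. (q div n, q mod n, Dz M (q div n) (q mod n))) [0..<p])"

lemma Lp_Suc: "Lp M n (Suc p) = Lp M n p @ (if Dz M (p div n) (p mod n) \<noteq> 0 then [(p div n, p mod n, Dz M (p div n) (p mod n))] else [])"
  unfolding Lp_def by simp

lemma Lp_sum:
  assumes "\<And>i j. g (i, j, 0) = (0::real)"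
  shows "(\<Sum>k<length (Lp M n (n*n)). g (Lp M n (n*n) ! k)) = (\<Sum>i<n. \<Sum>j<n. g (i, j, Dz M i j))"
proof -
  let ?h = "\<lambda>q. (q div n, q mod n, Dz M (q div n) (q mod n))"
  have "(\<Sum>k<length (Lp M n (n*n)). g (Lp M n (n*n) ! k)) = sum_list (map g (Lp M n (n*n)))"
    by (simp add: sum_list_sum_nth atLeast0LessThan)
  also have "\<dots> = sum_list (map g (map ?h [0..<n*n]))"
    unfolding Lp_def by (rule sum_list_map_filter) (auto simp: assms)
  also have "\<dots> = (\<Sum>q<n*n. g (?h q))"
    by (simp add: sum_list_sum_nth atLeast0LessThan)
  also have "\<dots> = (\<Sum>i<n. \<Sum>j<n. g (i, j, Dz M i j))"
    using sum_div_mod[of "\<lambda>i j. g (i, j, Dz M i j)" n n] by simp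
  finally show ?thesis .
qed

lemma Lp_length: "length (Lp M n (n*n)) \<le> card (Zc n M) + 2*n"
proof -
  let ?h = "\<lambda>q. (q div n, q mod n, Dz M (q div n) (q mod n))"
  let ?S = "{(i,j). i < n \<and> j < n \<and> Dz M i j \<noteq> 0}"
  have "length (Lp M n (n*n)) = card {q. q < n*n \<and> Dz M (q div n) (q mod n) \<noteq> 0}"
    unfolding Lp_def length_filter_conv_card by (intro arg_cong[where f=card] Collect_cong) auto
  also have "\<dots> \<le> card ?S"
  proof (rule card_inj_on_le[where f="\<lambda>q. (q div n, q mod n)"])
    show "inj_on (\<lambda>q. (q div n, q mod n)) {q. q < n*n \<and> Dz M (q div n) (q mod n) \<noteq> 0}"
      by (rule inj_onI) (metis div_mod_decomp prod.inject)
    show "(\<lambda>q. (q div n, q mod n)) ` {q. q < n*n \<and> Dz M (q div n) (q mod n) \<noteq> 0} \<subseteq> ?S"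
      by (auto simp: less_mult_imp_div_less) (metis mult_0_right not_less_zero mod_less_divisor neq0_conv)
    show "finite ?S" by (rule finite_subset[of _ "{..<n} \<times> {..<n}"]) auto
  qed
  also have "\<dots> \<le> card (Zc n M \<union> ({0} \<times> {..<n} \<union> {..<n} \<times> {0}))"
    by (rule card_mono) (use Zc_finite[of n M] in \<open>auto simp: Zc_def\<close>)
  also have "\<dots> \<le> card (Zc n M) + card ({0} \<times> {..<n} \<union> {..<n} \<times> {0})"
    by (rule card_Un_le)
  also have "card ({0} \<times> {..<n} \<union> {..<n} \<times> {0}) \<le> card ({0::nat} \<times> {..<n}) + card ({..<n} \<times> {0::nat})"
    by (rule card_Un_le)
  finally show ?thesis by (simp add: card_cartesian_product)
qed


abbreviation rd :: "int \<Rightarrow> iexp" where "rd a \<equiv> IRd (IConst a)"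
abbreviation NN :: iexp where "NN \<equiv> rd 0"

definition mat :: "iexp \<Rightarrow> iexp \<Rightarrow> iexp" where
  "mat r c = IRd (IAdd (IConst 2) (IAdd (IMul r NN) c))"

definition ent :: "iexp \<Rightarrow> int \<Rightarrow> iexp" where
  "ent k f = IAdd (IAdd (IConst 2) (IMul NN NN)) (IAdd (IMul (IConst 3) k) (IConst f))"

definition dcomp :: com where
  "dcomp = Seq (IStore (IConst (-4)) (mat (rd (-1)) (rd (-2))))
   (Seq (If (ILe (IConst 1) (rd (-1))) (IStore (IConst (-4)) (ISub (rd (-4)) (mat (ISub (rd (-1)) (IConst 1)) (rd (-2))))) Skip)
   (Seq (If (ILe (IConst 1) (rd (-2))) (IStore (IConst (-4)) (ISub (rd (-4)) (mat (rd (-1)) (ISub (rd (-2)) (IConst 1))))) Skip)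
        (If (BAnd (ILe (IConst 1) (rd (-1))) (ILe (IConst 1) (rd (-2))))
            (IStore (IConst (-4)) (IAdd (rd (-4)) (mat (ISub (rd (-1)) (IConst 1)) (ISub (rd (-2)) (IConst 1))))) Skip)))"

definition drest :: com where
  "drest = Seq (If (IEq (rd (-4)) (IConst 0)) Skip
        (Seq (IStore (ent (rd (-3)) 0) (rd (-1))) (Seq (IStore (ent (rd (-3)) 1) (rd (-2)))
          (Seq (IStore (ent (rd (-3)) 2) (rd (-4))) (IStore (IConst (-3)) (IAdd (rd (-3)) (IConst 1)))))))
     (IStore (IConst (-2)) (IAdd (rd (-2)) (IConst 1)))"

definition inner :: com where "inner = Seq dcomp drest"

definition Pre :: com where
  "Pre = While (BNot (ILe NN (rd (-1))))
     (Seq (IStore (IConst (-2)) (IConst 0))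
     (Seq (While (BNot (ILe NN (rd (-2)))) inner)
          (IStore (IConst (-1)) (IAdd (rd (-1)) (IConst 1)))))"

definition eaddr :: "nat \<Rightarrow> nat \<Rightarrow> int \<Rightarrow> int" where
  "eaddr n k f = 2 + int n * int n + (3 * int k + f)"

definition matok :: "(nat \<Rightarrow> nat \<Rightarrow> bool) \<Rightarrow> nat \<Rightarrow> (int \<Rightarrow> int) \<Rightarrow> bool" where
  "matok M n m \<longleftrightarrow> (\<forall>a b. a < n \<longrightarrow> b < n \<longrightarrow> m (2 + (int a * int n + int b)) = fM M a b)"

definition entok :: "(nat \<Rightarrow> nat \<Rightarrow> bool) \<Rightarrow> nat \<Rightarrow> (int \<Rightarrow> int) \<Rightarrow> nat \<Rightarrow> bool" where
  "entok M n m p \<longleftrightarrow> (\<forall>k < length (Lp M n p).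
      m (eaddr n k 0) = int (fst (Lp M n p ! k)) \<and>
      m (eaddr n k 1) = int (fst (snd (Lp M n p ! k))) \<and>
      m (eaddr n k 2) = snd (snd (Lp M n p ! k)))"

definition II :: "(nat \<Rightarrow> nat \<Rightarrow> bool) \<Rightarrow> nat \<Rightarrow> nat \<Rightarrow> nat \<Rightarrow> state \<Rightarrow> bool" where
  "II M n i j s \<longleftrightarrow> snd s = (\<lambda>_. 0) \<and> fst s 0 = int n \<and> fst s (-1) = int i \<and> fst s (-2) = int j
     \<and> fst s (-3) = int (length (Lp M n (i*n+j))) \<and> matok M n (fst s) \<and> entok M n (fst s) (i*n+j)"

definition OI :: "(nat \<Rightarrow> nat \<Rightarrow> bool) \<Rightarrow> nat \<Rightarrow> nat \<Rightarrow> state \<Rightarrow> bool" where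
  "OI M n i s \<longleftrightarrow> snd s = (\<lambda>_. 0) \<and> fst s 0 = int n \<and> fst s (-1) = int i
     \<and> fst s (-3) = int (length (Lp M n (i*n))) \<and> matok M n (fst s) \<and> entok M n (fst s) (i*n)"

lemma addr_lt: "a < n \<Longrightarrow> b < n \<Longrightarrow> int a * int n + int b < int n * int n"
proof -
  assume a: "a < n" and b: "b < n"
  have "Suc a * n \<le> n * n" using a by (intro mult_le_mono1) simp
  then have "a * n + b < n * n" using b by simp
  then have "int (a * n + b) < int (n * n)" by (simp only: of_nat_less_iff)
  then show ?thesis by simp
qed

lemma matok_upd: assumes "matok M n m" "X < 2 \<or> 2 + int n * int n \<le> X" shows "matok M n (m(X := V))"
  unfolding matok_def
proof (intro allI impI)
  fix a b assume ab: "a < n" "b < n"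
  have "0 \<le> int a * int n + int b" by simp
  then have "2 + (int a * int n + int b) \<noteq> X" using addr_lt[OF ab] assms(2) by linarith
  then show "(m(X := V)) (2 + (int a * int n + int b)) = fM M a b" using assms(1) ab unfolding matok_def by simp
qed

lemma eaddr_ge: "f \<ge> 0 \<Longrightarrow> 2 + int n * int n \<le> eaddr n k f"
  unfolding eaddr_def by simp

lemma entok_upd: assumes "entok M n m p" "X < 2 + int n * int n" shows "entok M n (m(X := V)) p"
  unfolding entok_def
proof (intro allI impI)
  fix k assume k: "k < length (Lp M n p)"
  have ne: "eaddr n k f \<noteq> X" if "f \<ge> 0" for f using eaddr_ge[OF that, of n k] assms(2) by linarith
  show "(m(X := V)) (eaddr n k 0) = int (fst (Lp M n p ! k)) \<and>
        (m(X := V)) (eaddr n k 1) = int (fst (snd (Lp M n p ! k))) \<and>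
        (m(X := V)) (eaddr n k 2) = snd (snd (Lp M n p ! k))"
    using assms(1) k ne[of 0] ne[of 1] ne[of 2] unfolding entok_def by simp
qed

lemma eaddr_inj: "eaddr n k f = eaddr n k' f' \<Longrightarrow> 0 \<le> f \<Longrightarrow> f < 3 \<Longrightarrow> 0 \<le> f' \<Longrightarrow> f' < 3 \<Longrightarrow> k = k' \<and> f = f'"
  unfolding eaddr_def by presburger

lemma entok_append:
  assumes e: "entok M n m p" and L: "Lp M n (Suc p) = Lp M n p @ [(a,b,c)]" and K: "K = length (Lp M n p)"
  shows "entok M n (m(eaddr n K 0 := int a, eaddr n K 1 := int b, eaddr n K 2 := c)) (Suc p)"
  unfolding entok_def
proof (intro allI impI)
  fix k assume k: "k < length (Lp M n (Suc p))"
  show "(m(eaddr n K 0 := int a, eaddr n K 1 := int b, eaddr n K 2 := c)) (eaddr n k 0) = int (fst (Lp M n (Suc p) ! k)) \<and>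
        (m(eaddr n K 0 := int a, eaddr n K 1 := int b, eaddr n K 2 := c)) (eaddr n k 1) = int (fst (snd (Lp M n (Suc p) ! k))) \<and>
        (m(eaddr n K 0 := int a, eaddr n K 1 := int b, eaddr n K 2 := c)) (eaddr n k 2) = snd (snd (Lp M n (Suc p) ! k))"
  proof (cases "k < K")
    case True
    have ne: "eaddr n k f \<noteq> eaddr n K g" if "0 \<le> f" "f < 3" "0 \<le> g" "g < 3" for f g
      using eaddr_inj[of n k f K g] that True by auto
    have "Lp M n (Suc p) ! k = Lp M n p ! k" using L K True by (simp add: nth_append)
    then show ?thesis using e True K ne unfolding entok_def by auto
  next
    case False
    then have kK: "k = K" using k L K by simp
    have ne: "eaddr n K f \<noteq> eaddr n K g" if "0 \<le> f" "f < 3" "0 \<le> g" "g < 3" "f \<noteq> g" for f g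
      using eaddr_inj[of n K f K g] that by auto
    have "Lp M n (Suc p) ! k = (a,b,c)" using L K kK by simp
    then show ?thesis using kK ne[of 0 1] ne[of 0 2] ne[of 1 2] by auto
  qed
qed

lemma runs_If': "1 \<le> T \<Longrightarrow> (beval b s \<Longrightarrow> runs c1 s Q (T - 1)) \<Longrightarrow> (\<not> beval b s \<Longrightarrow> runs c2 s Q (T - 1)) \<Longrightarrow> runs (If b c1 c2) s Q T"
  using runs_If[of b s c1 Q "T - 1" c2] by simp

lemma matok_read: assumes "matok M n m" "a < n" "b < n" "X < 0" shows "(m(X := V)) (2 + (int a * int n + int b)) = fM M a b"
proof -
  have "0 \<le> int a * int n" by simp
  then have "2 + (int a * int n + int b) \<noteq> X" using assms(4) by linarith
  then show ?thesis using assms(1-3) unfolding matok_def by simp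
qed

lemma dcomp_run:
  assumes inv: "II M n i j (m, r)" and ij: "i < n" "j < n"
  shows "runs dcomp (m, r) (\<lambda>s. s = (m(-4 := Dz M i j), r)) 7"
proof -
  have m: "m 0 = int n" "m (-1) = int i" "m (-2) = int j" and mo: "matok M n m"
    using inv unfolding II_def by auto
  have rd: "(m(-4 := V)) (2 + (int a * int n + int b)) = fM M a b" if "a < n" "b < n" for a b V
    by (rule matok_read[OF mo that]) simp
  have rdi: "(m(-4 := V)) (2 + ((int i - 1) * int n + int j)) = fM M (i-1) j" if "1 \<le> int i" for V
    using rd[of "i-1" j V] that ij by (simp add: of_nat_diff)
  have rdj: "(m(-4 := V)) (1 + (int i * int n + int j)) = fM M i (j-1)" if "1 \<le> j" for V
    using rd[of i "j-1" V] that ij by (simp add: of_nat_diff)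
  have rdij: "(m(-4 := V)) (1 + ((int i - 1) * int n + int j)) = fM M (i-1) (j-1)" if "1 \<le> i" "1 \<le> j" for V
    using rd[of "i-1" "j-1" V] that ij by (simp add: of_nat_diff)
  have rd0: "m (2 + (int i * int n + int j)) = fM M i j" using mo ij unfolding matok_def by simp
  show ?thesis
    unfolding dcomp_def mat_def
    apply (intro runs_Seq_IStore runs_Seq_If runs_Seq_Skip runs_If' runs_IStore runs_Skip)
    apply (simp_all del: fun_upd_apply add: fun_upd_other fun_upd_same m rd0 rdi rdj rdij Dz_def)
    done
qed

lemma ent_eval: "0 \<le> m 0 \<Longrightarrow> 0 \<le> ieval k m \<Longrightarrow> ieval (ent k f) m = eaddr (nat (m 0)) (nat (ieval k m)) f"
  unfolding ent_def eaddr_def by simp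

lemma eaddr_neq1: "0 \<le> f \<Longrightarrow> x < 2 \<Longrightarrow> eaddr n k f \<noteq> x"
  using eaddr_ge[of f n k] zero_le_mult_iff[of "int n" "int n"] by linarith
lemma eaddr_neq2: "0 \<le> f \<Longrightarrow> x < 2 \<Longrightarrow> x \<noteq> eaddr n k f"
  using eaddr_ge[of f n k] zero_le_mult_iff[of "int n" "int n"] by linarith
lemmas eaddr_neq = eaddr_neq1 eaddr_neq2

lemma zz: "0 < (c::int) \<Longrightarrow> 0 < c + int n * int n"
  by (simp add: add_pos_nonneg)

lemma zz_num[simp]: "0 < (numeral c::int) + int n * int n"
  by (simp add: add_pos_nonneg)

lemma pdivmod: assumes j: "(j::nat) < n" shows "(i*n+j) div n = i \<and> (i*n+j) mod n = j"
proof -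
  have n: "n \<noteq> 0" using j by simp
  have "(i*n + j) div n = (j + i*n) div n" by (simp add: add.commute)
  also have "\<dots> = i" using n j by simp
  moreover have "(i*n + j) mod n = (j + i*n) mod n" by (simp add: add.commute)
  moreover have "(j + i*n) mod n = j" using n j by simp
  ultimately show ?thesis by simp
qed

lemma II_zero:
  assumes inv: "II M n i j (m, r)" and ij: "i < n" "j < n" and D: "Dz M i j = 0"
  shows "II M n i (Suc j) (m(-4 := V, -2 := int j + 1), r)"
proof -
  have L: "Lp M n (Suc (i*n + j)) = Lp M n (i*n+j)"
    using Lp_Suc[of M n "i*n+j"] pdivmod[OF ij(2), of i] D by simp
  have z: "0 \<le> int n * int n" by simp
  have mo: "matok M n m" and eo: "entok M n m (i*n+j)" using inv unfolding II_def by auto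
  have "matok M n (m(-4 := V, -2 := int j + 1))" by (intro matok_upd mo) (auto intro: zz)
  moreover have "entok M n (m(-4 := V, -2 := int j + 1)) (i*n + j)"
    by (intro entok_upd eo) (auto intro: zz)
  then have "entok M n (m(-4 := V, -2 := int j + 1)) (Suc (i*n + j))"
    unfolding entok_def L .
  ultimately show ?thesis using inv L unfolding II_def by simp
qed

lemma II_nz:
  assumes inv: "II M n i j (m, r)" and ij: "i < n" "j < n" and D: "Dz M i j \<noteq> 0"
  shows "II M n i (Suc j) (m(- 4 := Dz M i j, eaddr n (length (Lp M n (i * n + j))) 0 := int i,
           eaddr n (length (Lp M n (i * n + j))) 1 := int j,
           eaddr n (length (Lp M n (i * n + j))) 2 := Dz M i j,
           - 3 := int (length (Lp M n (i * n + j))) + 1, - 2 := int j + 1), r)"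
proof -
  let ?K = "length (Lp M n (i * n + j))"
  have L: "Lp M n (Suc (i*n + j)) = Lp M n (i*n+j) @ [(i, j, Dz M i j)]"
    using Lp_Suc[of M n "i*n+j"] pdivmod[OF ij(2), of i] D by simp
  have mo: "matok M n m" and eo: "entok M n m (i*n+j)" using inv unfolding II_def by auto
  have z: "0 \<le> int n * int n" by simp
  have "matok M n (m(- 4 := Dz M i j, eaddr n ?K 0 := int i, eaddr n ?K 1 := int j, eaddr n ?K 2 := Dz M i j,
           - 3 := int ?K + 1, - 2 := int j + 1))"
    by (intro matok_upd mo) (auto simp: eaddr_ge intro: zz)
  moreover
  have e1: "entok M n (m(- 4 := Dz M i j)) (i*n+j)" by (intro entok_upd eo) (auto intro: zz)
  have e2: "entok M n (m(- 4 := Dz M i j, eaddr n ?K 0 := int i, eaddr n ?K 1 := int j, eaddr n ?K 2 := Dz M i j)) (Suc (i*n + j))"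
    by (rule entok_append[OF e1 L refl])
  have "entok M n (m(- 4 := Dz M i j, eaddr n ?K 0 := int i, eaddr n ?K 1 := int j, eaddr n ?K 2 := Dz M i j,
           - 3 := int ?K + 1, - 2 := int j + 1)) (Suc (i*n + j))"
    by (intro entok_upd e2) (auto intro: zz)
  ultimately show ?thesis using inv L unfolding II_def by (simp del: fun_upd_apply add: fun_upd_other fun_upd_same eaddr_neq)
qed

lemma drest_run:
  assumes inv: "II M n i j (m, r)" and ij: "i < n" "j < n"
  shows "runs drest (m(-4 := Dz M i j), r) (II M n i (Suc j)) 7"
proof -
  have m: "m 0 = int n" "m (-1) = int i" "m (-2) = int j" "m (-3) = int (length (Lp M n (i*n+j)))"
    and mo: "matok M n m" and eo: "entok M n m (i*n+j)" and r: "r = (\<lambda>_. 0)"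
    using inv unfolding II_def by auto
  show ?thesis
    unfolding drest_def
    apply (intro runs_Seq_IStore runs_Seq_If runs_Seq_Skip runs_If' runs_IStore runs_Skip runs_Seq_assoc)
    apply (simp_all del: fun_upd_apply add: fun_upd_other fun_upd_same m ent_eval eaddr_neq)
    using II_zero[OF inv ij] II_nz[OF inv ij] by auto
qed

lemma inner_run:
  assumes "II M n i j s" "i < n" "j < n"
  shows "runs inner s (II M n i (Suc j)) 14"
proof -
  obtain m r where s: "s = (m, r)" by (cases s)
  have "runs inner s (II M n i (Suc j)) (7 + 7)"
    unfolding inner_def s
    by (rule runs_Seq[OF dcomp_run[OF assms[unfolded s]]]) (use drest_run[OF assms[unfolded s]] in simp)
  then show ?thesis by simp
qed

lemma inner_loop:
  assumes "II M n i 0 s" "i < n"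
  shows "runs (While (BNot (ILe NN (rd (-2)))) inner) s (II M n i n) (n * Suc 14 + 1)"
proof (rule runs_While[where I="II M n i"])
  fix k s assume "k < n" "II M n i k s"
  then show "beval (BNot (ILe NN (rd (-2)))) s \<and> runs inner s (II M n i (Suc k)) 14"
    using inner_run[of M n i k s] assms(2) unfolding II_def by auto
next
  fix s assume "II M n i n s"
  then show "\<not> beval (BNot (ILe NN (rd (-2)))) s" unfolding II_def by auto
qed (rule assms(1))

definition obody :: com where
  "obody = Seq (IStore (IConst (-2)) (IConst 0))
     (Seq (While (BNot (ILe NN (rd (-2)))) inner)
          (IStore (IConst (-1)) (IAdd (rd (-1)) (IConst 1))))"

lemma Pre_obody: "Pre = While (BNot (ILe NN (rd (-1)))) obody"
  unfolding Pre_def obody_def ..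

lemma obody_run:
  assumes inv: "OI M n i (m, r)" and i: "i < n"
  shows "runs obody (m, r) (OI M n (Suc i)) (1 + ((n * Suc 14 + 1) + 1))"
  unfolding obody_def
proof (rule runs_Seq[where Q="II M n i 0"])
  show "runs (IStore (IConst (- 2)) (IConst 0)) (m, r) (II M n i 0) 1"
    apply (rule runs_IStore) using inv unfolding OI_def II_def
    by (auto intro!: matok_upd entok_upd intro: zz)
next
  fix s' assume s': "II M n i 0 s'"
  show "runs (Seq (While (BNot (ILe NN (rd (- 2)))) inner) (IStore (IConst (- 1)) (IAdd (rd (- 1)) (IConst 1)))) s'
         (OI M n (Suc i)) ((n * Suc 14 + 1) + 1)"
  proof (rule runs_Seq[OF inner_loop[OF s' i]])
    fix s'' assume s'': "II M n i n s''"
    obtain m2 r2 where s2: "s'' = (m2, r2)" by (cases s'')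
    have e: "i * n + n = Suc i * n" by simp
    show "runs (IStore (IConst (- 1)) (IAdd (rd (- 1)) (IConst 1))) s'' (OI M n (Suc i)) 1"
      unfolding s2 apply (rule runs_IStore) using s'' unfolding s2 OI_def II_def e
      by (auto intro!: matok_upd entok_upd intro: zz)
  qed
qed

lemma Pre_run:
  assumes "OI M n 0 s"
  shows "runs Pre s (OI M n n) (n * Suc (1 + ((n * Suc 14 + 1) + 1)) + 1)"
  unfolding Pre_obody
proof (rule runs_While[where I="OI M n"])
  fix k s assume k: "k < n" and inv: "OI M n k s"
  obtain m r where s: "s = (m, r)" by (cases s)
  show "beval (BNot (ILe NN (rd (-1)))) s \<and> runs obody s (OI M n (Suc k)) (1 + ((n * Suc 14 + 1) + 1))"
    using obody_run[OF inv[unfolded s] k] inv k unfolding s OI_def by auto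
next
  fix s assume "OI M n n s"
  then show "\<not> beval (BNot (ILe NN (rd (-1)))) s" unfolding OI_def by auto
qed (rule assms)

lemma pre_init: "OI M n 0 (pre_input n d M)"
proof -
  have z: "0 \<le> int n * int n" by simp
  have "matok M n (fst (pre_input n d M))"
    unfolding matok_def
  proof (intro allI impI)
    fix a b assume ab: "a < n" "b < n"
    define A where "A = int a * int n + int b"
    have lt: "A < int n * int n" unfolding A_def by (rule addr_lt[OF ab])
    have nn: "nat A = a * n + b" unfolding A_def by (simp add: nat_add_distrib nat_mult_distrib)
    have p: "0 \<le> A" unfolding A_def by simp
    have dm: "(a * n + b) div n = a" "(a * n + b) mod n = b" using pdivmod[OF ab(2), of a] by auto
    have "fst (pre_input n d M) (2 + A) = fM M a b"
      unfolding pre_input_def fM_def using lt nn dm p by auto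
    then show "fst (pre_input n d M) (2 + (int a * int n + int b)) = fM M a b" unfolding A_def .
  qed
  moreover have "entok M n (fst (pre_input n d M)) 0" unfolding entok_def Lp_def by simp
  ultimately show ?thesis unfolding OI_def pre_input_def Lp_def by simp
qed

definition oaddr :: "iexp \<Rightarrow> iexp" where
  "oaddr e = ISub (ISub (IConst 0) NN) (IAdd (IConst 1) e)"

definition body1 :: com where
  "body1 = Seq (RStore (IAdd (IConst 1) (rd (-5))) (RAdd (RRd (IAdd (IConst 2) (rd (-5)))) (RRd (ISub (IConst (-1)) (rd (-5))))))
            (IStore (IConst (-5)) (ISub (rd (-5)) (IConst 1)))"

definition body2 :: "int \<Rightarrow> int \<Rightarrow> com" where
  "body2 oa ob = Seq (RStore (oaddr (IRd (ent (rd (-6)) oa)))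
       (RAdd (RRd (oaddr (IRd (ent (rd (-6)) oa)))) (RMul (ROfInt (IRd (ent (rd (-6)) 2))) (RRd (IAdd (IConst 1) (IRd (ent (rd (-6)) ob)))))))
     (IStore (IConst (-6)) (IAdd (rd (-6)) (IConst 1)))"

definition body3 :: com where
  "body3 = Seq (RStore (oaddr (rd (-5))) (RAdd (RRd (oaddr (rd (-5)))) (RRd (oaddr (ISub (rd (-5)) (IConst 1))))))
            (IStore (IConst (-5)) (IAdd (rd (-5)) (IConst 1)))"

definition loop1 :: com where "loop1 = While (ILe (IConst 0) (rd (-5))) body1"
definition loop2 :: "int \<Rightarrow> int \<Rightarrow> com" where "loop2 oa ob = While (BNot (ILe (rd (-3)) (rd (-6)))) (body2 oa ob)"
definition loop3 :: com where "loop3 = While (BNot (ILe NN (rd (-5)))) body3"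

definition Qry :: "int \<Rightarrow> int \<Rightarrow> com" where
  "Qry oa ob = Seq (IStore (IConst (-5)) (ISub NN (IConst 1)))
     (Seq loop1
     (Seq (IStore (IConst (-6)) (IConst 0))
     (Seq (loop2 oa ob)
     (Seq (IStore (IConst (-5)) (IConst 1)) loop3))))"

definition r0 :: "nat \<Rightarrow> (nat \<Rightarrow> real) \<Rightarrow> int \<Rightarrow> real" where
  "r0 n v = (\<lambda>a. if - int n \<le> a \<and> a < 0 then v (nat (- a - 1)) else 0)"

definition I1 :: "nat \<Rightarrow> (nat \<Rightarrow> real) \<Rightarrow> (int \<Rightarrow> int) \<Rightarrow> nat \<Rightarrow> state \<Rightarrow> bool" where
  "I1 n v m0 t s \<longleftrightarrow> fst s = m0(-5 := int n - 1 - int t) \<and>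
     (\<forall>y\<le>n. n - t \<le> y \<longrightarrow> snd s (1 + int y) = Ssum v n y) \<and>
     (\<forall>y<n - t. snd s (-1 - int y) = v y) \<and>
     (\<forall>x<n. snd s (out_addr n x) = 0)"

lemma body1_run:
  assumes inv: "I1 n v m0 t (m, r)" and t: "t < n"
  shows "runs body1 (m, r) (I1 n v m0 (Suc t)) 2"
proof -
  have m: "m = m0(-5 := int n - 1 - int t)" using inv unfolding I1_def by simp
  have S: "\<And>y. y \<le> n \<Longrightarrow> n - t \<le> y \<Longrightarrow> r (1 + int y) = Ssum v n y"
    and V: "\<And>y. y < n - t \<Longrightarrow> r (-1 - int y) = v y"
    and O: "\<And>x. x < n \<Longrightarrow> r (out_addr n x) = 0" using inv unfolding I1_def by auto
  define y0 where "y0 = n - 1 - t"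
  have y0: "int y0 = int n - 1 - int t" "y0 < n" using t unfolding y0_def by auto
  have rS: "r (1 + (int n - int t)) = Ssum v n (n - t)"
    using S[of "n - t"] t by (simp add: of_nat_diff add.commute)
  have rV: "r (int t - int n) = v y0"
    using V[of y0] t y0 by (simp add: y0_def)
  have Snew: "Ssum v n y0 = Ssum v n (n - t) + v y0"
  proof -
    have e: "n - t = Suc y0" using t unfolding y0_def by simp
    show ?thesis unfolding Ssum_def e using y0(2) by (simp add: sum.atLeast_Suc_lessThan)
  qed
  show ?thesis
    unfolding body1_def
    apply (intro runs_Seq_RStore runs_IStore)
    apply (simp_all add: m)
    unfolding I1_def
  proof (intro conjI allI impI)
    let ?r = "r(int n - int t := r (1 + (int n - int t)) + r (int t - int n))"
    show "fst (m0(- 5 := int n - int t - 2), ?r) = m0(- 5 := int n - 1 - int (Suc t))" by simp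
    fix y assume y: "y \<le> n" "n - Suc t \<le> y"
    show "snd (m0(- 5 := int n - int t - 2), ?r) (1 + int y) = Ssum v n y"
    proof (cases "y = y0")
      case True
      then show ?thesis using rS rV Snew y0 by simp
    next
      case False
      then have "n - t \<le> y" using y unfolding y0_def by auto
      moreover have "1 + int y \<noteq> int n - int t" using False y0 by auto
      ultimately show ?thesis using S y by simp
    qed
  next
    let ?r = "r(int n - int t := r (1 + (int n - int t)) + r (int t - int n))"
    fix y assume y: "y < n - Suc t"
    have "-1 - int y \<noteq> int n - int t" using t by auto
    then show "snd (m0(- 5 := int n - int t - 2), ?r) (-1 - int y) = v y" using V y by simp
  next
    let ?r = "r(int n - int t := r (1 + (int n - int t)) + r (int t - int n))"
    fix x assume x: "x < n"
    have "out_addr n x \<noteq> int n - int t" using t unfolding out_addr_def by auto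
    then show "snd (m0(- 5 := int n - int t - 2), ?r) (out_addr n x) = 0" using O x by simp
  qed
qed


lemma loop1_run:
  assumes "I1 n v m0 0 s"
  shows "runs loop1 s (I1 n v m0 n) (n * Suc 2 + 1)"
  unfolding loop1_def
proof (rule runs_While[where I="I1 n v m0"])
  fix k s assume k: "k < n" and inv: "I1 n v m0 k s"
  obtain m r where s: "s = (m, r)" by (cases s)
  show "beval (ILe (IConst 0) (rd (-5))) s \<and> runs body1 s (I1 n v m0 (Suc k)) 2"
    using body1_run[OF inv[unfolded s] k] inv k unfolding s I1_def by auto
next
  fix s assume "I1 n v m0 n s"
  then show "\<not> beval (ILe (IConst 0) (rd (-5))) s" unfolding I1_def by auto
qed (rule assms)

lemma I1_init: "I1 n v m0 0 (m0(-5 := int n - 1), r0 n v)"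
  unfolding I1_def r0_def out_addr_def Ssum_def by auto

definition acc :: "(nat \<Rightarrow> nat) \<Rightarrow> (nat \<Rightarrow> nat) \<Rightarrow> (nat \<Rightarrow> int) \<Rightarrow> (nat \<Rightarrow> real) \<Rightarrow> nat \<Rightarrow> nat \<Rightarrow> nat \<Rightarrow> real" where
  "acc A B C v n k x = (\<Sum>k'<k. (if A k' = x then of_int (C k') * Ssum v n (B k') else 0))"

definition I2 :: "nat \<Rightarrow> (nat \<Rightarrow> real) \<Rightarrow> (int \<Rightarrow> int) \<Rightarrow> (nat \<Rightarrow> nat) \<Rightarrow> (nat \<Rightarrow> nat) \<Rightarrow> (nat \<Rightarrow> int) \<Rightarrow> nat \<Rightarrow> state \<Rightarrow> bool" where
  "I2 n v m0 A B C k s \<longleftrightarrow> fst s = m0(-5 := -1, -6 := int k) \<and>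
     (\<forall>y<n. snd s (1 + int y) = Ssum v n y) \<and>
     (\<forall>x<n. snd s (out_addr n x) = acc A B C v n k x)"

lemma I2_init: "I1 n v m0 n (m, r) \<Longrightarrow> I2 n v m0 A B C 0 (m(-6 := 0), r)"
  unfolding I1_def I2_def acc_def by auto

definition ments :: "nat \<Rightarrow> (int \<Rightarrow> int) \<Rightarrow> nat \<Rightarrow> int \<Rightarrow> int \<Rightarrow> (nat \<Rightarrow> nat) \<Rightarrow> (nat \<Rightarrow> nat) \<Rightarrow> (nat \<Rightarrow> int) \<Rightarrow> bool" where
  "ments n m0 K oa ob A B C \<longleftrightarrow> m0 0 = int n \<and> m0 (-3) = int K \<and> 0 \<le> oa \<and> 0 \<le> ob \<and>
     (\<forall>k<K. m0 (eaddr n k oa) = int (A k) \<and> m0 (eaddr n k ob) = int (B k) \<and> m0 (eaddr n k 2) = C k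
        \<and> A k < n \<and> B k < n)"

lemma body2_run:
  assumes inv: "I2 n v m0 A B C k (m, r)" and me: "ments n m0 K oa ob A B C" and k: "k < K"
  shows "runs (body2 oa ob) (m, r) (I2 n v m0 A B C (Suc k)) 2"
proof -
  have m: "m = m0(-5 := -1, -6 := int k)" using inv unfolding I2_def by simp
  have S: "\<And>y. y < n \<Longrightarrow> r (1 + int y) = Ssum v n y"
    and O: "\<And>x. x < n \<Longrightarrow> r (out_addr n x) = acc A B C v n k x" using inv unfolding I2_def by auto
  have e: "m0 0 = int n" "m0 (-3) = int K" "0 \<le> oa" "0 \<le> ob"
    "m0 (eaddr n k oa) = int (A k)" "m0 (eaddr n k ob) = int (B k)" "m0 (eaddr n k 2) = C k" "A k < n" "B k < n"
    using me k unfolding ments_def by auto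
  show ?thesis
    unfolding body2_def oaddr_def
    apply (intro runs_Seq_RStore runs_IStore)
    apply (simp_all del: fun_upd_apply add: fun_upd_other fun_upd_same m ent_eval eaddr_neq e)
    unfolding I2_def
  proof (intro conjI allI impI)
    let ?r = "r(- int n - (1 + int (A k)) := r (- int n - (1 + int (A k))) + real_of_int (C k) * r (1 + int (B k)))"
    have oa: "- int n - (1 + int (A k)) = out_addr n (A k)" unfolding out_addr_def by simp
    show "fst (m0(- 5 := - 1, - 6 := int k + 1), ?r) = m0(- 5 := - 1, - 6 := int (Suc k))" by (simp add: add.commute)
    fix y assume y: "y < n"
    have "1 + int y \<noteq> - int n - (1 + int (A k))" by linarith
    then show "snd (m0(- 5 := - 1, - 6 := int k + 1), ?r) (1 + int y) = Ssum v n y" using S y by simp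
  next
    let ?r = "r(- int n - (1 + int (A k)) := r (- int n - (1 + int (A k))) + real_of_int (C k) * r (1 + int (B k)))"
    have oa: "- int n - (1 + int (A k)) = out_addr n (A k)" unfolding out_addr_def by simp
    fix x assume x: "x < n"
    have accS: "acc A B C v n (Suc k) x = acc A B C v n k x + (if A k = x then of_int (C k) * Ssum v n (B k) else 0)"
      unfolding acc_def by simp
    show "snd (m0(- 5 := - 1, - 6 := int k + 1), ?r) (out_addr n x) = acc A B C v n (Suc k) x"
    proof (cases "x = A k")
      case True
      then show ?thesis using oa O[OF x] S[OF e(9)] accS by simp
    next
      case False
      then have "out_addr n x \<noteq> - int n - (1 + int (A k))" unfolding out_addr_def by simp
      then show ?thesis using O[OF x] accS False by auto
    qed
  qed
qed

lemma loop2_run: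
  assumes "I2 n v m0 A B C 0 s" and me: "ments n m0 K oa ob A B C"
  shows "runs (loop2 oa ob) s (I2 n v m0 A B C K) (K * Suc 2 + 1)"
  unfolding loop2_def
proof (rule runs_While[where I="I2 n v m0 A B C"])
  have e: "m0 (-3) = int K" using me unfolding ments_def by simp
  fix k s assume k: "k < K" and inv: "I2 n v m0 A B C k s"
  obtain m r where s: "s = (m, r)" by (cases s)
  show "beval (BNot (ILe (rd (-3)) (rd (-6)))) s \<and> runs (body2 oa ob) s (I2 n v m0 A B C (Suc k)) 2"
    using body2_run[OF inv[unfolded s] me k] inv k e unfolding s I2_def by auto
next
  have e: "m0 (-3) = int K" using me unfolding ments_def by simp
  fix s assume "I2 n v m0 A B C K s"
  then show "\<not> beval (BNot (ILe (rd (-3)) (rd (-6)))) s" using e unfolding I2_def by auto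
qed (rule assms)

definition pre :: "(nat \<Rightarrow> nat) \<Rightarrow> (nat \<Rightarrow> nat) \<Rightarrow> (nat \<Rightarrow> int) \<Rightarrow> (nat \<Rightarrow> real) \<Rightarrow> nat \<Rightarrow> nat \<Rightarrow> nat \<Rightarrow> real" where
  "pre A B C v n K x = (\<Sum>x'<Suc x. acc A B C v n K x')"

definition I3 :: "nat \<Rightarrow> (nat \<Rightarrow> real) \<Rightarrow> (int \<Rightarrow> int) \<Rightarrow> (nat \<Rightarrow> nat) \<Rightarrow> (nat \<Rightarrow> nat) \<Rightarrow> (nat \<Rightarrow> int) \<Rightarrow> nat \<Rightarrow> nat \<Rightarrow> state \<Rightarrow> bool" where
  "I3 n v m0 A B C K t s \<longleftrightarrow> fst s = m0(-6 := int K, -5 := int t + 1) \<and>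
     (\<forall>x<n. snd s (out_addr n x) = (if x \<le> t then pre A B C v n K x else acc A B C v n K x))"

lemma I3_init: "I2 n v m0 A B C K (m, r) \<Longrightarrow> I3 n v m0 A B C K 0 (m(-5 := 1), r)"
  unfolding I2_def I3_def pre_def by (auto simp: fun_eq_iff)

lemma body3_run:
  assumes inv: "I3 n v m0 A B C K t (m, r)" and t: "Suc t < n" and m00: "m0 0 = int n"
  shows "runs body3 (m, r) (I3 n v m0 A B C K (Suc t)) 2"
proof -
  have m: "m = m0(-6 := int K, -5 := int t + 1)" using inv unfolding I3_def by simp
  have O: "\<And>x. x < n \<Longrightarrow> r (out_addr n x) = (if x \<le> t then pre A B C v n K x else acc A B C v n K x)"
    using inv unfolding I3_def by auto
  have a1: "- int n - (2 + int t) = out_addr n (Suc t)" unfolding out_addr_def by simp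
  have a0: "- int n - (1 + int t) = out_addr n t" unfolding out_addr_def by simp
  show ?thesis
    unfolding body3_def oaddr_def
    apply (intro runs_Seq_RStore runs_IStore)
    apply (simp_all add: m m00)
    unfolding I3_def
  proof (intro conjI allI impI)
    let ?r = "r(- int n - (2 + int t) := r (- int n - (2 + int t)) + r (- int n - (1 + int t)))"
    show "fst (m0(- 6 := int K, - 5 := 2 + int t), ?r) = m0(- 6 := int K, - 5 := int (Suc t) + 1)" by simp
    fix x assume x: "x < n"
    show "snd (m0(- 6 := int K, - 5 := 2 + int t), ?r) (out_addr n x) =
      (if x \<le> Suc t then pre A B C v n K x else acc A B C v n K x)"
    proof (cases "x = Suc t")
      case True
      have "pre A B C v n K (Suc t) = acc A B C v n K (Suc t) + pre A B C v n K t"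
        unfolding pre_def by simp
      then show ?thesis using True a1 a0 O[OF t] O[of t] t by simp
    next
      case False
      then have "out_addr n x \<noteq> - int n - (2 + int t)" unfolding out_addr_def by simp
      then show ?thesis using O[OF x] False by auto
    qed
  qed
qed


lemma loop3_run:
  assumes "I3 n v m0 A B C K 0 s" and m00: "m0 0 = int n" and n: "1 \<le> n"
  shows "runs loop3 s (I3 n v m0 A B C K (n - 1)) ((n - 1) * Suc 2 + 1)"
  unfolding loop3_def
proof (rule runs_While[where I="I3 n v m0 A B C K"])
  fix k s assume k: "k < n - 1" and inv: "I3 n v m0 A B C K k s"
  obtain m r where s: "s = (m, r)" by (cases s)
  have k': "Suc k < n" using k by simp
  show "beval (BNot (ILe NN (rd (-5)))) s \<and> runs body3 s (I3 n v m0 A B C K (Suc k)) 2"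
    using body3_run[OF inv[unfolded s] k' m00] inv k m00 unfolding s I3_def by auto
next
  fix s assume "I3 n v m0 A B C K (n - 1) s"
  then show "\<not> beval (BNot (ILe NN (rd (-5)))) s" using m00 n unfolding I3_def by auto
qed (rule assms)

lemma Qry_run:
  assumes me: "ments n m0 K oa ob A B C" and n: "1 \<le> n"
  shows "runs (Qry oa ob) (m0, r0 n v) (\<lambda>s. \<forall>x<n. snd s (out_addr n x) = pre A B C v n K x)
     (1 + ((n * Suc 2 + 1) + (1 + ((K * Suc 2 + 1) + (1 + ((n - 1) * Suc 2 + 1))))))"
proof -
  have m00: "m0 0 = int n" using me unfolding ments_def by simp
  have c6: "runs loop3 s (\<lambda>s. \<forall>x<n. snd s (out_addr n x) = pre A B C v n K x) ((n - 1) * Suc 2 + 1)"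
    if "I3 n v m0 A B C K 0 s" for s
    by (rule runs_mono[OF loop3_run[OF that m00 n]]) (auto simp: I3_def)
  have c5: "runs (Seq (IStore (IConst (-5)) (IConst 1)) loop3) s (\<lambda>s. \<forall>x<n. snd s (out_addr n x) = pre A B C v n K x)
      (1 + ((n - 1) * Suc 2 + 1))"
    if "I2 n v m0 A B C K s" for s
  proof -
    obtain m r where s: "s = (m, r)" by (cases s)
    show ?thesis
      by (rule runs_Seq[OF _ c6], unfold s, rule runs_IStore) (use I3_init that[unfolded s] in auto)
  qed
  have c4: "runs (Seq (loop2 oa ob) (Seq (IStore (IConst (-5)) (IConst 1)) loop3)) s
      (\<lambda>s. \<forall>x<n. snd s (out_addr n x) = pre A B C v n K x) ((K * Suc 2 + 1) + (1 + ((n - 1) * Suc 2 + 1)))"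
    if "I2 n v m0 A B C 0 s" for s
    by (rule runs_Seq[OF loop2_run[OF that me] c5])
  have c3: "runs (Seq (IStore (IConst (-6)) (IConst 0)) (Seq (loop2 oa ob) (Seq (IStore (IConst (-5)) (IConst 1)) loop3))) s
      (\<lambda>s. \<forall>x<n. snd s (out_addr n x) = pre A B C v n K x) (1 + ((K * Suc 2 + 1) + (1 + ((n - 1) * Suc 2 + 1))))"
    if "I1 n v m0 n s" for s
  proof -
    obtain m r where s: "s = (m, r)" by (cases s)
    show ?thesis
      by (rule runs_Seq[OF _ c4], unfold s, rule runs_IStore) (use I2_init[where A=A and B=B and C=C] that[unfolded s] in auto)
  qed
  have c2: "runs (Seq loop1 (Seq (IStore (IConst (-6)) (IConst 0)) (Seq (loop2 oa ob) (Seq (IStore (IConst (-5)) (IConst 1)) loop3))))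
      (m0(-5 := int n - 1), r0 n v)
      (\<lambda>s. \<forall>x<n. snd s (out_addr n x) = pre A B C v n K x) ((n * Suc 2 + 1) + (1 + ((K * Suc 2 + 1) + (1 + ((n - 1) * Suc 2 + 1)))))"
    by (rule runs_Seq[OF loop1_run[OF I1_init] c3])
  show ?thesis
    unfolding Qry_def
  proof (rule runs_Seq[where Q="\<lambda>s. s = (m0(-5 := int n - 1), r0 n v)"])
    show "runs (IStore (IConst (- 5)) (ISub NN (IConst 1))) (m0, r0 n v) (\<lambda>s. s = (m0(- 5 := int n - 1), r0 n v)) 1"
      by (rule runs_IStore) (auto simp: m00)
  qed (use c2 in simp)
qed

lemma pre_eq: "(\<forall>k<K. A k < n) \<Longrightarrow> pre A B C v n K x = (\<Sum>k<K. if A k \<le> x then of_int (C k) * Ssum v n (B k) else 0)"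
proof -
  have "pre A B C v n K x = (\<Sum>k<K. \<Sum>x'<Suc x. (if A k = x' then of_int (C k) * Ssum v n (B k) else 0))"
    unfolding pre_def acc_def by (rule sum.swap)
  also have "\<dots> = (\<Sum>k<K. if A k \<le> x then of_int (C k) * Ssum v n (B k) else 0)"
    by (rule sum.cong) (auto simp: sum.delta)
  finally show ?thesis .
qed


lemma Lp_bounds: "x \<in> set (Lp M n (n*n)) \<Longrightarrow> fst x < n \<and> fst (snd x) < n"
proof -
  assume "x \<in> set (Lp M n (n*n))"
  then obtain q where q: "q < n*n" "x = (q div n, q mod n, Dz M (q div n) (q mod n))"
    unfolding Lp_def by auto
  have "0 < n" using q(1) by (cases n) auto
  then show ?thesis using q by (simp add: less_mult_imp_div_less)
qed

lemma sum_Lp_col: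
  assumes x: "x < n"
  shows "(\<Sum>k<length (Lp M n (n*n)). if fst (Lp M n (n*n) ! k) \<le> x
            then of_int (snd (snd (Lp M n (n*n) ! k))) * Ssum v n (fst (snd (Lp M n (n*n) ! k))) else 0)
       = (\<Sum>j<n. of_bool (M x j) * v j)"
proof -
  let ?g = "\<lambda>(i::nat, j::nat, c::int). if i \<le> x then real_of_int c * Ssum v n j else 0"
  have "(\<Sum>k<length (Lp M n (n*n)). if fst (Lp M n (n*n) ! k) \<le> x
            then of_int (snd (snd (Lp M n (n*n) ! k))) * Ssum v n (fst (snd (Lp M n (n*n) ! k))) else 0)
       = (\<Sum>k<length (Lp M n (n*n)). ?g (Lp M n (n*n) ! k))"
    by (rule sum.cong) (auto split: prod.splits)
  also have "\<dots> = (\<Sum>i<n. \<Sum>j<n. ?g (i, j, Dz M i j))"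
    by (rule Lp_sum) simp
  also have "\<dots> = (\<Sum>j<n. of_bool (M x j) * v j)"
    using main_sum[OF x, of M v] by simp
  finally show ?thesis .
qed

lemma sum_Lp_row:
  assumes x: "x < n"
  shows "(\<Sum>k<length (Lp M n (n*n)). if fst (snd (Lp M n (n*n) ! k)) \<le> x
            then of_int (snd (snd (Lp M n (n*n) ! k))) * Ssum v n (fst (Lp M n (n*n) ! k)) else 0)
       = (\<Sum>i<n. v i * of_bool (M i x))"
proof -
  let ?g = "\<lambda>(i::nat, j::nat, c::int). if j \<le> x then real_of_int c * Ssum v n i else 0"
  let ?Mt = "\<lambda>i j. M j i"
  have "(\<Sum>k<length (Lp M n (n*n)). if fst (snd (Lp M n (n*n) ! k)) \<le> x
            then of_int (snd (snd (Lp M n (n*n) ! k))) * Ssum v n (fst (Lp M n (n*n) ! k)) else 0)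
       = (\<Sum>k<length (Lp M n (n*n)). ?g (Lp M n (n*n) ! k))"
    by (rule sum.cong) (auto split: prod.splits)
  also have "\<dots> = (\<Sum>i<n. \<Sum>j<n. ?g (i, j, Dz M i j))"
    by (rule Lp_sum) simp
  also have "\<dots> = (\<Sum>j<n. \<Sum>i<n. ?g (i, j, Dz M i j))"
    by (rule sum.swap)
  also have "\<dots> = (\<Sum>j<n. \<Sum>i<n. if j \<le> x then real_of_int (Dz ?Mt j i) * Ssum v n i else 0)"
  proof -
    have e: "\<And>i j. Dz ?Mt j i = Dz M i j" by (rule Dz_transpose)
    show ?thesis by (simp only: e prod.case)
  qed
  also have "\<dots> = (\<Sum>i<n. of_bool (?Mt x i) * v i)"
    by (rule main_sum[OF x])
  also have "\<dots> = (\<Sum>i<n. v i * of_bool (M i x))"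
    by (simp add: mult.commute)
  finally show ?thesis .
qed

theorem theorem1:
  shows "\<exists>(C::nat) P Qcol Qrow.
    \<forall>n d (M :: nat \<Rightarrow> nat \<Rightarrow> bool). 1 \<le> d \<longrightarrow> twin_ordered n d M \<longrightarrow>
      (\<exists>t s. big_step P (pre_input n d M) t s \<and> t \<le> C * (n ^ 2 + d * n) \<and>
        (\<forall>v :: nat \<Rightarrow> real.
          (\<exists>t' s'. big_step Qcol (query_input n v s) t' s' \<and> t' \<le> C * (d * n) \<and>
             (\<forall>i<n. snd s' (out_addr n i) = (\<Sum>j<n. of_bool (M i j) * v j))) \<and>
          (\<exists>t' s'. big_step Qrow (query_input n v s) t' s' \<and> t' \<le> C * (d * n) \<and>
             (\<forall>j<n. snd s' (out_addr n j) = (\<Sum>i<n. v i * of_bool (M i j))))))"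
proof (rule exI[of _ 30], rule exI[of _ Pre], rule exI[of _ "Qry 0 1"], rule exI[of _ "Qry 1 0"], intro allI impI)
  fix n d :: nat and M :: "nat \<Rightarrow> nat \<Rightarrow> bool"
  assume d: "1 \<le> d" and tw: "twin_ordered n d M"
  obtain ds where ms: "merge_sequence n ds" and w: "\<forall>D\<in>set ds. wide_division d M D"
    using tw unfolding twin_ordered_def by blast
  have n: "1 \<le> n" using ms unfolding merge_sequence_def by (cases n) auto
  have lds: "length ds = 2 * n - 1" using ms unfolding merge_sequence_def by simp
  define L where "L = Lp M n (n*n)"
  define K where "K = length L"
  have Kb2: "K \<le> 4 * d * n + 2 * n"
  proof -
    have "length ds - 1 \<le> 2 * n" using lds by simp
    then have "2 * d * (length ds - 1) \<le> 2 * d * (2 * n)" by (rule mult_le_mono2)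
    then have "card (Zc n M) \<le> 2 * d * (2 * n)" using Zc_bound[OF ms w] by (meson le_trans)
    then have "card (Zc n M) \<le> 4 * d * n" by simp
    then show ?thesis using Lp_length[of M n] unfolding K_def L_def by simp
  qed
  obtain tp sp where pr: "big_step Pre (pre_input n d M) tp sp" "tp \<le> n * Suc (1 + ((n * Suc 14 + 1) + 1)) + 1"
    "OI M n n sp"
    using Pre_run[OF pre_init[of M n d]] unfolding runs_def by blast
  obtain m r where sp: "sp = (m, r)" by (cases sp)
  have oi: "r = (\<lambda>_. 0)" "m 0 = int n" "m (-3) = int K" "entok M n m (n*n)"
    using pr(3) unfolding sp OI_def K_def L_def by auto
  have tpb: "tp \<le> 30 * (n ^ 2 + d * n)"
  proof -
    have "n * Suc (1 + ((n * Suc 14 + 1) + 1)) + 1 = 15 * (n * n) + 4 * n + 1" by (simp add: algebra_simps)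
    also have "\<dots> \<le> 30 * (n * n)"
    proof -
      have "n \<le> n * n" by (rule le_square)
      moreover have "1 \<le> n * n" using n by simp
      ultimately show ?thesis by linarith
    qed
    finally show ?thesis using pr(2) by (simp add: power2_eq_square algebra_simps)
  qed
  have qi: "query_input n v sp = (m, r0 n v)" for v
    unfolding query_input_def sp r0_def oi(1) fst_conv snd_conv by (rule refl)
  have inL: "fst (L ! k) < n \<and> fst (snd (L ! k)) < n" if "k < K" for k
    using Lp_bounds[of "L ! k" M n] that unfolding K_def L_def by simp
  have me_col: "ments n m K 0 1 (\<lambda>k. fst (L ! k)) (\<lambda>k. fst (snd (L ! k))) (\<lambda>k. snd (snd (L ! k)))"
    using oi(2,3,4) inL unfolding ments_def entok_def K_def L_def by auto
  have me_row: "ments n m K 1 0 (\<lambda>k. fst (snd (L ! k))) (\<lambda>k. fst (L ! k)) (\<lambda>k. snd (snd (L ! k)))"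
    using oi(2,3,4) inL unfolding ments_def entok_def K_def L_def by auto
  have qtime: "1 + ((n * Suc 2 + 1) + (1 + ((K * Suc 2 + 1) + (1 + ((n - 1) * Suc 2 + 1))))) \<le> 30 * (d * n)"
  proof -
    have "1 + ((n * Suc 2 + 1) + (1 + ((K * Suc 2 + 1) + (1 + ((n - 1) * Suc 2 + 1))))) \<le> 6 * n + 3 * K + 6"
      using n by simp
    also have "\<dots> \<le> 12 * n + 12 * (d * n) + 6" using Kb2 by simp
    also have "\<dots> \<le> 30 * (d * n)"
    proof -
      have "n \<le> d * n" using d by simp
      moreover have "1 \<le> d * n" using d n by (simp add: Suc_le_eq)
      ultimately show ?thesis by linarith
    qed
    finally show ?thesis .
  qed
  show "\<exists>t s. big_step Pre (pre_input n d M) t s \<and> t \<le> 30 * (n ^ 2 + d * n) \<and>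
        (\<forall>v :: nat \<Rightarrow> real.
          (\<exists>t' s'. big_step (Qry 0 1) (query_input n v s) t' s' \<and> t' \<le> 30 * (d * n) \<and>
             (\<forall>i<n. snd s' (out_addr n i) = (\<Sum>j<n. of_bool (M i j) * v j))) \<and>
          (\<exists>t' s'. big_step (Qry 1 0) (query_input n v s) t' s' \<and> t' \<le> 30 * (d * n) \<and>
             (\<forall>j<n. snd s' (out_addr n j) = (\<Sum>i<n. v i * of_bool (M i j)))))"
  proof (rule exI[of _ tp], rule exI[of _ sp], intro conjI allI)
    show "big_step Pre (pre_input n d M) tp sp" by (rule pr(1))
    show "tp \<le> 30 * (n ^ 2 + d * n)" by (rule tpb)
  next
    fix v :: "nat \<Rightarrow> real"
    obtain t' s' where q: "big_step (Qry 0 1) (m, r0 n v) t' s'"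
      "t' \<le> 1 + ((n * Suc 2 + 1) + (1 + ((K * Suc 2 + 1) + (1 + ((n - 1) * Suc 2 + 1)))))"
      "\<forall>x<n. snd s' (out_addr n x) = pre (\<lambda>k. fst (L ! k)) (\<lambda>k. fst (snd (L ! k))) (\<lambda>k. snd (snd (L ! k))) v n K x"
      using Qry_run[OF me_col n, of v] unfolding runs_def by blast
    have "\<forall>i<n. snd s' (out_addr n i) = (\<Sum>j<n. of_bool (M i j) * v j)"
    proof (intro allI impI)
      fix i assume i: "i < n"
      have "pre (\<lambda>k. fst (L ! k)) (\<lambda>k. fst (snd (L ! k))) (\<lambda>k. snd (snd (L ! k))) v n K i
          = (\<Sum>k<K. if fst (L ! k) \<le> i then of_int (snd (snd (L ! k))) * Ssum v n (fst (snd (L ! k))) else 0)"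
        by (rule pre_eq) (use inL in auto)
      also have "\<dots> = (\<Sum>j<n. of_bool (M i j) * v j)"
        unfolding K_def L_def by (rule sum_Lp_col[OF i])
      finally show "snd s' (out_addr n i) = (\<Sum>j<n. of_bool (M i j) * v j)" using q(3) i by simp
    qed
    then show "\<exists>t' s'. big_step (Qry 0 1) (query_input n v sp) t' s' \<and> t' \<le> 30 * (d * n) \<and>
             (\<forall>i<n. snd s' (out_addr n i) = (\<Sum>j<n. of_bool (M i j) * v j))"
      using q qtime qi by (intro exI[of _ t'] exI[of _ s']) auto
  next
    fix v :: "nat \<Rightarrow> real"
    obtain t' s' where q: "big_step (Qry 1 0) (m, r0 n v) t' s'"
      "t' \<le> 1 + ((n * Suc 2 + 1) + (1 + ((K * Suc 2 + 1) + (1 + ((n - 1) * Suc 2 + 1)))))"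
      "\<forall>x<n. snd s' (out_addr n x) = pre (\<lambda>k. fst (snd (L ! k))) (\<lambda>k. fst (L ! k)) (\<lambda>k. snd (snd (L ! k))) v n K x"
      using Qry_run[OF me_row n, of v] unfolding runs_def by blast
    have "\<forall>j<n. snd s' (out_addr n j) = (\<Sum>i<n. v i * of_bool (M i j))"
    proof (intro allI impI)
      fix j assume j: "j < n"
      have "pre (\<lambda>k. fst (snd (L ! k))) (\<lambda>k. fst (L ! k)) (\<lambda>k. snd (snd (L ! k))) v n K j
          = (\<Sum>k<K. if fst (snd (L ! k)) \<le> j then of_int (snd (snd (L ! k))) * Ssum v n (fst (L ! k)) else 0)"
        by (rule pre_eq) (use inL in auto)
      also have "\<dots> = (\<Sum>i<n. v i * of_bool (M i j))"
        unfolding K_def L_def by (rule sum_Lp_row[OF j])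
      finally show "snd s' (out_addr n j) = (\<Sum>i<n. v i * of_bool (M i j))" using q(3) j by simp
    qed
    then show "\<exists>t' s'. big_step (Qry 1 0) (query_input n v sp) t' s' \<and> t' \<le> 30 * (d * n) \<and>
             (\<forall>j<n. snd s' (out_addr n j) = (\<Sum>i<n. v i * of_bool (M i j)))"
      using q qtime qi by (intro exI[of _ t'] exI[of _ s']) auto
  qed
qed


end
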